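(* Let $X$ be a $T_0$ topological space and $x,y\in X$. Then $x\ll_{\operatorname{Irr}} y$ if and only if for every net $(x_i)_{i\in I}$ in $X$ that $\operatorname{Irr}$-converges to $y$, there exists $k\in I$ such that $x_i\ge x$ for all $i\ge k$.
   Context: For a topological space $X$, a nonempty subset $E$ is irreducible if whenever $E\subseteq A_1\cup A_2$ with $A_1,A_2$ closed, $E\subseteq A_1$ or $E\subseteq A_2$. The specialisation order is $x\le y$ iff $x\in\operatorname{cl}(\{y\})$; $\uparrow x=\{z:z\ge x\}$; $\bigvee$ denotes supremum in this order. $\operatorname{Irr}^+(X)$ is the set of irreducible subsets whose supremum exists. $x\ll_{\operatorname{Irr}} y$ iff for every $E\in\operatorname{Irr}^+(X)$ with $\bigvee E\ge y$, $E\cap\uparrow x\ne\emptyset$. A net $(x_i)_{i\in I}$ is a map from a preorder $(I,\le)$ to $X$. A net $(x_i)_{i\in I}$ $\operatorname{Irr}$-converges to $y$ if there is $E\in\operatorname{Irr}^+(X)$ with $\bigvee E\ge y$ such that for each $e\in E$ there is $k(e)\in I$ with $x_i\ge e$ for all $i\ge k(e)$. *)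

theory Defs
  imports "HOL-Analysis.Analysis"
begin

definition spec_le :: "'a topology \<Rightarrow> 'a \<Rightarrow> 'a \<Rightarrow> bool" where
  "spec_le T x y \<longleftrightarrow> x \<in> topspace T \<and> y \<in> topspace T \<and> x \<in> T closure_of {y}"

definition up_set :: "'a topology \<Rightarrow> 'a \<Rightarrow> 'a set" where
  "up_set T x = {z \<in> topspace T. spec_le T x z}"

definition is_sup :: "'a topology \<Rightarrow> 'a set \<Rightarrow> 'a \<Rightarrow> bool" where
  "is_sup T E s \<longleftrightarrow> s \<in> topspace T \<and> (\<forall>e\<in>E. spec_le T e s) \<and>
     (\<forall>u\<in>topspace T. (\<forall>e\<in>E. spec_le T e u) \<longrightarrow> spec_le T s u)"

definition irreducible_in :: "'a topology \<Rightarrow> 'a set \<Rightarrow> bool" where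
  "irreducible_in T E \<longleftrightarrow> E \<noteq> {} \<and> E \<subseteq> topspace T \<and>
     (\<forall>A1 A2. closedin T A1 \<and> closedin T A2 \<and> E \<subseteq> A1 \<union> A2 \<longrightarrow> E \<subseteq> A1 \<or> E \<subseteq> A2)"

definition Irr_plus :: "'a topology \<Rightarrow> 'a set set" where
  "Irr_plus T = {E. irreducible_in T E \<and> (\<exists>s. is_sup T E s)}"

text \<open>\<Or>E \<ge> y (the supremum is unique in a T0 space).\<close>
definition sup_ge :: "'a topology \<Rightarrow> 'a set \<Rightarrow> 'a \<Rightarrow> bool" where
  "sup_ge T E y \<longleftrightarrow> (\<exists>s. is_sup T E s \<and> spec_le T y s)"

definition way_below_Irr :: "'a topology \<Rightarrow> 'a \<Rightarrow> 'a \<Rightarrow> bool" where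
  "way_below_Irr T x y \<longleftrightarrow>
     (\<forall>E\<in>Irr_plus T. sup_ge T E y \<longrightarrow> E \<inter> up_set T x \<noteq> {})"

definition is_net :: "'a topology \<Rightarrow> 'i set \<Rightarrow> ('i \<Rightarrow> 'i \<Rightarrow> bool) \<Rightarrow> ('i \<Rightarrow> 'a) \<Rightarrow> bool" where
  "is_net T I le net \<longleftrightarrow> (\<forall>i\<in>I. le i i) \<and>
     (\<forall>i\<in>I. \<forall>j\<in>I. \<forall>k\<in>I. le i j \<and> le j k \<longrightarrow> le i k) \<and> net ` I \<subseteq> topspace T"

definition Irr_converges :: "'a topology \<Rightarrow> 'i set \<Rightarrow> ('i \<Rightarrow> 'i \<Rightarrow> bool) \<Rightarrow> ('i \<Rightarrow> 'a) \<Rightarrow> 'a \<Rightarrow> bool" where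
  "Irr_converges T I le net y \<longleftrightarrow>
     (\<exists>E\<in>Irr_plus T. sup_ge T E y \<and>
        (\<forall>e\<in>E. \<exists>k\<in>I. \<forall>i\<in>I. le k i \<longrightarrow> spec_le T e (net i)))"

text \<open>The net condition of the proposition, for nets whose index sets live in type 'i.\<close>
definition net_cond :: "'i itself \<Rightarrow> 'a topology \<Rightarrow> 'a \<Rightarrow> 'a \<Rightarrow> bool" where
  "net_cond _ T x y \<longleftrightarrow>
     (\<forall>(I::'i set) le net. is_net T I le net \<and> Irr_converges T I le net y \<longrightarrow>
        (\<exists>k\<in>I. \<forall>i\<in>I. le k i \<longrightarrow> spec_le T x (net i)))"

end

theory Submission
  imports Defs
begin

lemma spec_le_trans:
  assumes "spec_le T a b" "spec_le T b c" shows "spec_le T a c"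
proof -
  have "{b} \<subseteq> T closure_of {c}" using assms(2) unfolding spec_le_def by auto
  then have "T closure_of {b} \<subseteq> T closure_of {c}"
    by (simp add: closure_of_minimal)
  then show ?thesis using assms unfolding spec_le_def by auto
qed

lemma spec_le_refl: "a \<in> topspace T \<Longrightarrow> spec_le T a a"
  unfolding spec_le_def using closure_of_subset[of "{a}" T] by auto

theorem proposition4p2:
  fixes T :: "'a topology" and x y :: 'a
  assumes "t0_space T" and "x \<in> topspace T" and "y \<in> topspace T"
  shows "(way_below_Irr T x y \<longleftrightarrow> net_cond TYPE('a) T x y) \<and>
         (way_below_Irr T x y \<longrightarrow> net_cond TYPE('i) T x y)"
proof -
  have fwd: "net_cond dummy T x y" if wb: "way_below_Irr T x y" for dummy :: "'j itself"
    unfolding net_cond_def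
  proof (intro allI impI)
    fix I :: "'j set" and le net
    assume "is_net T I le net \<and> Irr_converges T I le net y"
    then obtain E where E: "E \<in> Irr_plus T" "sup_ge T E y"
      and conv: "\<forall>e\<in>E. \<exists>k\<in>I. \<forall>i\<in>I. le k i \<longrightarrow> spec_le T e (net i)"
      unfolding Irr_converges_def by blast
    from wb E obtain e where e: "e \<in> E" "e \<in> up_set T x" unfolding way_below_Irr_def by blast
    from conv e obtain k where "k \<in> I" "\<forall>i\<in>I. le k i \<longrightarrow> spec_le T e (net i)" by blast
    moreover have "spec_le T x e" using e unfolding up_set_def by auto
    ultimately show "\<exists>k\<in>I. \<forall>i\<in>I. le k i \<longrightarrow> spec_le T x (net i)"
      by (meson spec_le_trans)
  qed
  have bwd: "way_below_Irr T x y" if nc: "net_cond TYPE('a) T x y"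
    unfolding way_below_Irr_def
  proof (intro ballI impI)
    fix E assume E: "E \<in> Irr_plus T" "sup_ge T E y"
    have Esub: "E \<subseteq> topspace T" using E unfolding Irr_plus_def irreducible_in_def by auto
    have net: "is_net T E (spec_le T) id"
    proof -
      have "\<forall>i\<in>E. spec_le T i i"
      proof
        fix i assume "i \<in> E" then have "i \<in> topspace T" using Esub by blast
        then show "spec_le T i i" by (rule spec_le_refl)
      qed
      moreover have "\<forall>i\<in>E. \<forall>j\<in>E. \<forall>k\<in>E. spec_le T i j \<and> spec_le T j k \<longrightarrow> spec_le T i k"
        by (metis spec_le_trans)
      moreover have "id ` E \<subseteq> topspace T" using Esub by simp
      ultimately show ?thesis unfolding is_net_def by (simp only:)
    qed
    have cv: "Irr_converges T E (spec_le T) id y"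
      unfolding Irr_converges_def using E by auto
    from nc[unfolded net_cond_def, rule_format, of E "spec_le T" id] net cv
    obtain k where k: "k \<in> E" "\<forall>i\<in>E. spec_le T k i \<longrightarrow> spec_le T x i" by auto
    have "k \<in> topspace T" using k(1) Esub by blast
    then have "spec_le T k k" by (rule spec_le_refl)
    then have "spec_le T x k" using k by blast
    then show "E \<inter> up_set T x \<noteq> {}" using k Esub unfolding up_set_def by auto
  qed
  show ?thesis using fwd[of "TYPE('a)"] fwd[of "TYPE('i)"] bwd by blast
qed

end
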